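(* Let $x\in U$ and let $F_1,F_2\subset T_xM$ be subspaces of dimension $d$ contained in $C(x)$. There exists $\kappa\in(0,1)$ such that for every $n\ge1$, $$\theta_{f^i(x)}(Df^i(x)F_1,Df^i(x)F_2)\le\kappa^i\,\theta_x(F_1,F_2)\quad\text{for every }1\le i\le n.$$
   Context: Setting: $M$ compact Riemannian manifold, $f:M\to M$ a $C^{1+\alpha}$ non-singular endomorphism, $U$ open with $f(\overline U)\subset U$, continuous splitting $T_UM=E^s\oplus F$, constant $0<\lambda<1$, with $Df(x)E^s_x=E^s_{f(x)}$, $\|Df^n(x)|_{E^s_x}\|\le\lambda^n$, a cone field $x\mapsto C(x)$ on $U$ of constant dimension $d=\dim F$ with $Df(x)C(x)\subseteq C(f(x))$, and the domination $\|Df(x)v\|\|Df(x)^{-1}w\|\le\lambda\|v\|\|w\|$ for $v\in E^s_x$, $w\in Df(x)C(x)$, $x\in U$. For $d$-dimensional subspaces $F_1,F_2\subset C(x)$ there are unique linear maps $L_{F_2}:F_1\to E^s_x$ and $L_{F_1}:F_2\to E^s_x$ with $F_2=\{v+L_{F_2}v: v\in F_1\}$ and $F_1=\{v+L_{F_1}v:v\in F_2\}$; define $\theta_x(F_1,F_2)=\max\{\|L_{F_1}\|,\|L_{F_2}\|\}$. *)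

theory Defs
  imports "HOL-Analysis.Analysis"
begin

text \<open>The compact Riemannian manifold M is modelled as a compact embedded C^1
submanifold of a Euclidean space 'a (Nash embedding), with the induced metric.\<close>

definition C1_map_on :: "'a::euclidean_space set \<Rightarrow> ('a \<Rightarrow> 'b::euclidean_space) \<Rightarrow> ('a \<Rightarrow> 'a \<Rightarrow> 'b) \<Rightarrow> bool" where
  "C1_map_on N g g' \<longleftrightarrow> open N \<and>
     (\<forall>y\<in>N. (g has_derivative g' y) (at y)) \<and>
     (\<forall>y\<in>N. \<forall>e>0. \<exists>\<delta>>0. \<forall>z\<in>N. dist z y < \<delta> \<longrightarrow> onorm (\<lambda>v. g' z v - g' y v) < e)"

definition C1_submanifold :: "'a::euclidean_space set \<Rightarrow> nat \<Rightarrow> bool" where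
  "C1_submanifold M k \<longleftrightarrow>
     (\<forall>p\<in>M. \<exists>V W (\<phi>::'a\<Rightarrow>'a) \<psi> \<phi>' \<psi>' S. open V \<and> p \<in> V \<and> open W \<and>
        homeomorphism V W \<phi> \<psi> \<and> C1_map_on V \<phi> \<phi>' \<and> C1_map_on W \<psi> \<psi>' \<and>
        subspace S \<and> dim S = k \<and> \<phi> ` (M \<inter> V) = W \<inter> S)"

definition tangent_space :: "'a::euclidean_space set \<Rightarrow> 'a \<Rightarrow> 'a set" where
  "tangent_space M x = {v. \<exists>\<gamma>::real \<Rightarrow> 'a. \<gamma> 0 = x \<and> (\<gamma> has_vector_derivative v) (at 0) \<and>
                          (\<exists>e>0. \<forall>t. \<bar>t\<bar> < e \<longrightarrow> \<gamma> t \<in> M)}"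

fun iter_deriv :: "('a \<Rightarrow> 'a) \<Rightarrow> ('a \<Rightarrow> 'a \<Rightarrow> 'a) \<Rightarrow> nat \<Rightarrow> 'a \<Rightarrow> 'a \<Rightarrow> 'a" where
  "iter_deriv f f' 0 x = id"
| "iter_deriv f f' (Suc n) x = f' ((f ^^ n) x) \<circ> iter_deriv f f' n x"

text \<open>Continuity of a field of subspaces (Grassmannian topology, via unit vectors).\<close>
definition continuous_subspace_field :: "'a::euclidean_space set \<Rightarrow> ('a \<Rightarrow> 'a set) \<Rightarrow> bool" where
  "continuous_subspace_field U E \<longleftrightarrow>
     (\<forall>x\<in>U. \<forall>e>0. \<exists>\<delta>>0. \<forall>y\<in>U. dist y x < \<delta> \<longrightarrow>
        (\<forall>v\<in>E x. norm v = 1 \<longrightarrow> (\<exists>w\<in>E y. dist v w < e)) \<and>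
        (\<forall>w\<in>E y. norm w = 1 \<longrightarrow> (\<exists>v\<in>E x. dist v w < e)))"

definition cone_of_dim :: "'a::euclidean_space set \<Rightarrow> nat \<Rightarrow> bool" where
  "cone_of_dim C d \<longleftrightarrow> closed C \<and> (\<forall>v\<in>C. \<forall>t::real. t *\<^sub>R v \<in> C) \<and>
     (\<exists>S. subspace S \<and> dim S = d \<and> S \<subseteq> C) \<and>
     (\<forall>S. subspace S \<and> S \<subseteq> C \<longrightarrow> dim S \<le> d)"

definition graph_map :: "'a::euclidean_space set \<Rightarrow> 'a set \<Rightarrow> 'a set \<Rightarrow> 'a \<Rightarrow> 'a" where
  "graph_map E F1 F2 = (THE L. (\<forall>v\<in>F1. L v \<in> E) \<and>
      (\<forall>u\<in>F1. \<forall>v\<in>F1. L (u + v) = L u + L v) \<and>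
      (\<forall>c::real. \<forall>v\<in>F1. L (c *\<^sub>R v) = c *\<^sub>R L v) \<and>
      F2 = {v + L v | v. v \<in> F1} \<and> (\<forall>v. v \<notin> F1 \<longrightarrow> L v = 0))"

definition op_norm_on :: "'a::euclidean_space set \<Rightarrow> ('a \<Rightarrow> 'a) \<Rightarrow> real" where
  "op_norm_on S L = Sup {norm (L v) | v. v \<in> S \<and> norm v \<le> 1}"

text \<open>theta_x(F1,F2) = max(||L_{F1}||, ||L_{F2}||) where E = E^s_x.\<close>
definition theta :: "'a::euclidean_space set \<Rightarrow> 'a set \<Rightarrow> 'a set \<Rightarrow> real" where
  "theta E F1 F2 = max (op_norm_on F2 (graph_map E F2 F1)) (op_norm_on F1 (graph_map E F1 F2))"

end

theory Submission
  imports Defs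
begin

definition gpred :: "'a::euclidean_space set \<Rightarrow> 'a set \<Rightarrow> 'a set \<Rightarrow> ('a \<Rightarrow> 'a) \<Rightarrow> bool" where
  "gpred E F1 F2 L \<longleftrightarrow> (\<forall>v\<in>F1. L v \<in> E) \<and>
      (\<forall>u\<in>F1. \<forall>v\<in>F1. L (u + v) = L u + L v) \<and>
      (\<forall>c::real. \<forall>v\<in>F1. L (c *\<^sub>R v) = c *\<^sub>R L v) \<and>
      F2 = {v + L v | v. v \<in> F1} \<and> (\<forall>v. v \<notin> F1 \<longrightarrow> L v = 0)"

lemma gpred_unique:
  assumes E: "subspace E" and F1: "subspace F1" and I: "F1 \<inter> E \<subseteq> {0}"
    and P: "gpred E F1 F2 L" and Q: "gpred E F1 F2 L2"
  shows "L2 = L"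
proof
  fix v show "L2 v = L v"
  proof (cases "v \<in> F1")
    case True
    have "v + L2 v \<in> F2" using Q True unfolding gpred_def by blast
    then obtain u where u: "u \<in> F1" "v + L2 v = u + L u" using P unfolding gpred_def by blast
    have "v - u = L u - L2 v" using u(2) by (simp add: algebra_simps)
    moreover have "v - u \<in> F1" using F1 True u(1) subspace_diff by blast
    moreover have "L u - L2 v \<in> E" using P Q u(1) True E subspace_diff unfolding gpred_def by metis
    ultimately have "v - u = 0" using I by auto
    then show ?thesis using u(2) by simp
  next
    case False then show ?thesis using P Q unfolding gpred_def by simp
  qed
qed

lemma graph_map_eq:
  assumes "subspace E" "subspace F1" "F1 \<inter> E \<subseteq> {0}" "gpred E F1 F2 L"
  shows "graph_map E F1 F2 = L"
  unfolding graph_map_def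
  apply (rule the_equality)
  using assms(4) unfolding gpred_def apply blast
  using gpred_unique[OF assms] unfolding gpred_def by blast

lemma gpred_exists:
  assumes E: "subspace E" and F1: "subspace F1" and F2: "subspace F2" and I: "F2 \<inter> E \<subseteq> {0}"
    and S2: "F2 \<subseteq> {a + b | a b. a \<in> F1 \<and> b \<in> E}"
    and S1: "F1 \<subseteq> {a + b | a b. a \<in> F2 \<and> b \<in> E}"
  shows "\<exists>L. gpred E F1 F2 L"
proof -
  have ex: "\<exists>e. e \<in> E \<and> v + e \<in> F2" if vF: "v \<in> F1" for v
  proof -
    obtain w e where "w \<in> F2" "e \<in> E" "v = w + e" using S1 vF by blast
    then show ?thesis using E subspace_neg[OF E] by (intro exI[of _ "-e"]) auto
  qed
  have un: "e1 = e2" if "e1 \<in> E" "v + e1 \<in> F2" "e2 \<in> E" "v + e2 \<in> F2" for v e1 e2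
  proof -
    have "(v + e1) - (v + e2) \<in> F2" using that F2 subspace_diff by blast
    moreover have "e1 - e2 \<in> E" using that E subspace_diff by blast
    ultimately show ?thesis using I by auto
  qed
  define L where "L v = (if v \<in> F1 then (SOME e. e \<in> E \<and> v + e \<in> F2) else 0)" for v
  have L1: "L v \<in> E \<and> v + L v \<in> F2" if "v \<in> F1" for v
    using someI_ex[OF ex[OF that]] that unfolding L_def by simp
  have Lu: "L v = e" if "v \<in> F1" "e \<in> E" "v + e \<in> F2" for v e
    using un L1 that by blast
  show ?thesis unfolding gpred_def
  proof (intro exI[of _ L] conjI ballI allI impI)
    fix v assume "v \<in> F1" then show "L v \<in> E" using L1 by blast
  next
    fix u v assume uv: "u \<in> F1" "v \<in> F1"
    show "L (u + v) = L u + L v"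
    proof (rule Lu)
      show "u + v \<in> F1" using uv F1 subspace_add by blast
      show "L u + L v \<in> E" using uv L1 E subspace_add by blast
      have "(u + L u) + (v + L v) \<in> F2" using uv L1 F2 subspace_add by blast
      then show "u + v + (L u + L v) \<in> F2" by (simp add: algebra_simps)
    qed
  next
    fix c :: real and v assume v: "v \<in> F1"
    show "L (c *\<^sub>R v) = c *\<^sub>R L v"
    proof (rule Lu)
      show "c *\<^sub>R v \<in> F1" using v F1 subspace_scale by blast
      show "c *\<^sub>R L v \<in> E" using v L1 E subspace_scale by blast
      have "c *\<^sub>R (v + L v) \<in> F2" using v L1 F2 subspace_scale by blast
      then show "c *\<^sub>R v + c *\<^sub>R L v \<in> F2" by (simp add: algebra_simps)
    qed
  next
    show "F2 = {v + L v |v. v \<in> F1}"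
    proof
      show "{v + L v |v. v \<in> F1} \<subseteq> F2" using L1 by blast
      show "F2 \<subseteq> {v + L v |v. v \<in> F1}"
      proof
        fix w assume w: "w \<in> F2"
        then obtain a b where ab: "a \<in> F1" "b \<in> E" "w = a + b" using S2 by blast
        then have "L a = b" using Lu w by blast
        then show "w \<in> {v + L v |v. v \<in> F1}" using ab by blast
      qed
    qed
  next
    fix v assume "v \<notin> F1" then show "L v = 0" unfolding L_def by simp
  qed
qed

lemma lin_on_bounded:
  fixes L :: "'a::euclidean_space \<Rightarrow> 'a"
  assumes S: "subspace S"
    and add: "\<forall>u\<in>S. \<forall>v\<in>S. L (u + v) = L u + L v"
    and sc: "\<forall>c::real. \<forall>v\<in>S. L (c *\<^sub>R v) = c *\<^sub>R L v"
  shows "\<exists>B>0. \<forall>v\<in>S. norm (L v) \<le> B * norm v"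
proof -
  obtain B where B: "B \<subseteq> S" "independent B" "S \<subseteq> span B" "card B = dim S"
    using basis_exists by blast
  obtain g where g: "linear g" "\<forall>x\<in>B. g x = L x"
    using linear_independent_extend[OF B(2), of L] by blast
  have L0: "L 0 = 0" using sc S subspace_0 by (metis scale_zero_left)
  have sub: "subspace {v \<in> S. g v = L v}"
    unfolding subspace_def using S add sc g(1) L0
    by (auto simp: subspace_0 subspace_add subspace_scale linear_add linear_scale linear_0
        dest: bspec[where x=0] spec[where x=0])
  have "span B \<subseteq> {v \<in> S. g v = L v}"
    by (rule span_minimal) (use B g sub in auto)
  then have eq: "\<forall>v\<in>S. g v = L v" using B(3) by blast
  obtain C where "C > 0" "\<And>x. norm (g x) \<le> C * norm x" using linear_bounded_pos[OF g(1)] by blast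
  then show ?thesis using eq by metis
qed

lemma opnorm_le:
  fixes L :: "'a::euclidean_space \<Rightarrow> 'a"
  assumes S: "subspace S"
    and add: "\<forall>u\<in>S. \<forall>v\<in>S. L (u + v) = L u + L v"
    and sc: "\<forall>c::real. \<forall>v\<in>S. L (c *\<^sub>R v) = c *\<^sub>R L v"
    and v: "v \<in> S"
  shows "norm (L v) \<le> op_norm_on S L * norm v"
proof -
  obtain B where B: "B > 0" "\<forall>v\<in>S. norm (L v) \<le> B * norm v"
    using lin_on_bounded[OF S add sc] by blast
  have bdd: "bdd_above {norm (L v) | v. v \<in> S \<and> norm v \<le> 1}"
  proof (rule bdd_aboveI[of _ B], clarify)
    fix w assume "w \<in> S" "norm w \<le> 1"
    then show "norm (L w) \<le> B" using B(2)[rule_format, of w] B(1)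
      by (smt (verit) mult_left_le)
  qed
  show ?thesis
  proof (cases "v = 0")
    case True
    have "L 0 = 0" using sc S subspace_0 by (metis scale_zero_left)
    then show ?thesis using True by simp
  next
    case False
    let ?u = "(1 / norm v) *\<^sub>R v"
    have uS: "?u \<in> S" using S v subspace_scale by blast
    have "norm ?u \<le> 1" using False by simp
    then have "norm (L ?u) \<le> op_norm_on S L"
      unfolding op_norm_on_def using uS by (intro cSup_upper[OF _ bdd]) blast
    moreover have "L ?u = (1 / norm v) *\<^sub>R L v" using sc v by blast
    ultimately have "norm (L v) / norm v \<le> op_norm_on S L" by simp
    then show ?thesis using False by (simp add: divide_le_eq)
  qed
qed

lemma opnorm_nonneg:
  fixes L :: "'a::euclidean_space \<Rightarrow> 'a"
  assumes S: "subspace S"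
    and add: "\<forall>u\<in>S. \<forall>v\<in>S. L (u + v) = L u + L v"
    and sc: "\<forall>c::real. \<forall>v\<in>S. L (c *\<^sub>R v) = c *\<^sub>R L v"
  shows "0 \<le> op_norm_on S L"
proof -
  obtain B where B: "B > 0" "\<forall>v\<in>S. norm (L v) \<le> B * norm v"
    using lin_on_bounded[OF S add sc] by blast
  have bdd: "bdd_above {norm (L v) | v. v \<in> S \<and> norm v \<le> 1}"
  proof (rule bdd_aboveI[of _ B], clarify)
    fix w assume "w \<in> S" "norm w \<le> 1"
    then show "norm (L w) \<le> B" using B(2)[rule_format, of w] B(1)
      by (smt (verit) mult_left_le)
  qed
  have mem: "norm (L 0) \<in> {norm (L v) | v. v \<in> S \<and> norm v \<le> 1}"
    using subspace_0[OF S] by (intro CollectI exI[of _ 0]) simp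
  have "norm (L 0) \<le> op_norm_on S L"
    unfolding op_norm_on_def by (rule cSup_upper[OF mem bdd])
  then show ?thesis by (smt (verit) norm_ge_zero)
qed

lemma step:
  fixes A :: "'a::euclidean_space \<Rightarrow> 'a"
  assumes A: "linear A" and E: "subspace E" and E': "subspace E'" and G1: "subspace G1"
    and AE: "A ` E \<subseteq> E'"
    and dom: "\<forall>v\<in>E. \<forall>u\<in>G1. norm (A v) * norm u \<le> lam * norm v * norm (A u)"
    and lam: "0 \<le> lam"
    and P: "gpred E G1 G2 L"
  shows "\<exists>L'. gpred E' (A ` G1) (A ` G2) L' \<and> op_norm_on (A ` G1) L' \<le> lam * op_norm_on G1 L"
proof -
  have LE: "\<And>v. v \<in> G1 \<Longrightarrow> L v \<in> E"
    and Ladd: "\<forall>u\<in>G1. \<forall>v\<in>G1. L (u + v) = L u + L v"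
    and Lsc: "\<forall>c::real. \<forall>v\<in>G1. L (c *\<^sub>R v) = c *\<^sub>R L v"
    and G2: "G2 = {v + L v | v. v \<in> G1}"
    using P unfolding gpred_def by blast+
  have wd: "A (L a) = A (L b)" if ab: "a \<in> G1" "b \<in> G1" "A a = A b" for a b
  proof -
    have d: "a - b \<in> G1" using ab G1 subspace_diff by blast
    have "L a = L (a - b) + L b" using Ladd[rule_format, of "a-b" b] d ab by simp
    then have Ld: "L (a - b) = L a - L b" by (simp add: algebra_simps)
    have "A (a - b) = 0" using ab A by (simp add: linear_diff)
    then have "norm (A (L (a - b))) * norm (a - b) \<le> 0"
      using dom LE[OF d] d by (metis mult_zero_right norm_zero)
    then have "norm (A (L (a - b))) * norm (a - b) = 0"
      by (smt (verit) mult_nonneg_nonneg norm_ge_zero)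
    then have "A (L (a - b)) = 0 \<or> a - b = 0" by (simp only: mult_eq_0_iff norm_eq_zero)
    then show ?thesis
    proof
      assume "A (L (a - b)) = 0" then show ?thesis using Ld A by (simp add: linear_diff)
    next
      assume "a - b = 0" then show ?thesis by simp
    qed
  qed
  define L' where "L' w = (if w \<in> A ` G1 then A (L (inv_into G1 A w)) else 0)" for w
  have L'A: "L' (A v) = A (L v)" if v: "v \<in> G1" for v
  proof -
    have "inv_into G1 A (A v) \<in> G1" using v by (simp add: inv_into_into)
    moreover have "A (inv_into G1 A (A v)) = A v" using v by (simp add: f_inv_into_f)
    ultimately have "A (L (inv_into G1 A (A v))) = A (L v)" using v by (intro wd)
    moreover have "A v \<in> A ` G1" using v by (rule imageI)
    ultimately show ?thesis unfolding L'_def by simp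
  qed
  have opnn: "0 \<le> op_norm_on G1 L" using opnorm_nonneg[OF G1 Ladd Lsc] .
  have gp: "gpred E' (A ` G1) (A ` G2) L'"
    unfolding gpred_def
  proof (intro conjI ballI allI impI)
    fix w assume "w \<in> A ` G1"
    then obtain v where "v \<in> G1" "w = A v" by blast
    then show "L' w \<in> E'" using L'A LE AE by auto
  next
    fix u w assume "u \<in> A ` G1" "w \<in> A ` G1"
    then obtain a b where ab: "a \<in> G1" "b \<in> G1" "u = A a" "w = A b" by blast
    have "a + b \<in> G1" using ab G1 subspace_add by blast
    have "u + w = A (a + b)" using ab A by (simp add: linear_add)
    then have "L' (u + w) = A (L (a + b))" using L'A[OF \<open>a + b \<in> G1\<close>] by simp
    also have "\<dots> = L' u + L' w" using ab Ladd L'A A by (simp add: linear_add)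
    finally show "L' (u + w) = L' u + L' w" .
  next
    fix c :: real and w assume "w \<in> A ` G1"
    then obtain a where a: "a \<in> G1" "w = A a" by blast
    have "c *\<^sub>R a \<in> G1" using a G1 subspace_scale by blast
    have "c *\<^sub>R w = A (c *\<^sub>R a)" using a A by (simp add: linear_scale)
    then have "L' (c *\<^sub>R w) = A (L (c *\<^sub>R a))" using L'A[OF \<open>c *\<^sub>R a \<in> G1\<close>] by simp
    also have "\<dots> = c *\<^sub>R L' w" using a Lsc L'A A by (simp add: linear_scale)
    finally show "L' (c *\<^sub>R w) = c *\<^sub>R L' w" .
  next
    show "A ` G2 = {w + L' w |w. w \<in> A ` G1}"
    proof
      show "A ` G2 \<subseteq> {w + L' w |w. w \<in> A ` G1}"
      proof
        fix z assume "z \<in> A ` G2"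
        then obtain v where v: "v \<in> G1" "z = A (v + L v)" using G2 by blast
        then have "z = A v + L' (A v)" using L'A A by (simp add: linear_add)
        then show "z \<in> {w + L' w |w. w \<in> A ` G1}" using v by blast
      qed
      show "{w + L' w |w. w \<in> A ` G1} \<subseteq> A ` G2"
      proof
        fix z assume "z \<in> {w + L' w |w. w \<in> A ` G1}"
        then obtain v where v: "v \<in> G1" "z = A v + L' (A v)" by blast
        then have "z = A (v + L v)" using L'A A by (simp add: linear_add)
        moreover have "v + L v \<in> G2" using G2 v by blast
        ultimately show "z \<in> A ` G2" by blast
      qed
    qed
  next
    fix w assume "w \<notin> A ` G1" then show "L' w = 0" unfolding L'_def by simp
  qed
  have "op_norm_on (A ` G1) L' \<le> lam * op_norm_on G1 L"
    unfolding op_norm_on_def[of "A ` G1"]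
  proof (rule cSup_least)
    show "{norm (L' v) |v. v \<in> A ` G1 \<and> norm v \<le> 1} \<noteq> {}"
    proof -
      have "A 0 \<in> A ` G1" using subspace_0[OF G1] by (rule imageI)
      moreover have "norm (A 0) \<le> 1" using A by (simp add: linear_0)
      ultimately have "norm (L' (A 0)) \<in> {norm (L' v) |v. v \<in> A ` G1 \<and> norm v \<le> 1}"
        by (intro CollectI exI[of _ "A 0"]) simp
      then show ?thesis by blast
    qed
  next
    fix r assume "r \<in> {norm (L' v) |v. v \<in> A ` G1 \<and> norm v \<le> 1}"
    then obtain v where v: "v \<in> G1" "norm (A v) \<le> 1" "r = norm (L' (A v))"
      by blast
    then have v3: "r = norm (A (L v))" using L'A by simp
    have d: "norm (A (L v)) * norm v \<le> lam * norm (L v) * norm (A v)"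
      using dom LE[OF v(1)] v(1) by blast
    have nl: "norm (L v) \<le> op_norm_on G1 L * norm v" using opnorm_le[OF G1 Ladd Lsc v(1)] .
    have "lam * norm (L v) * norm (A v) \<le> lam * (op_norm_on G1 L * norm v) * 1"
      using nl v(2) lam by (intro mult_mono mult_left_mono) (auto simp: opnn)
    with d have "norm (A (L v)) * norm v \<le> (lam * op_norm_on G1 L) * norm v" by simp
    show "r \<le> lam * op_norm_on G1 L"
    proof (cases "v = 0")
      case True
      have "L 0 = 0" using Lsc G1 subspace_0 by (metis scale_zero_left)
      then show ?thesis using True v3 A lam opnn by (simp add: linear_0)
    next
      case False
      then show ?thesis using v3 \<open>norm (A (L v)) * norm v \<le> (lam * op_norm_on G1 L) * norm v\<close>
        by simp
    qed
  qed
  with gp show ?thesis by blast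
qed

lemma sum_cover:
  fixes T E F :: "'a::euclidean_space set"
  assumes T: "subspace T" and E: "subspace E" and F: "subspace F"
    and ET: "E \<subseteq> T" and FT: "F \<subseteq> T" and I: "F \<inter> E \<subseteq> {0}"
    and D: "dim E + dim F = dim T"
  shows "T \<subseteq> {a + b | a b. a \<in> F \<and> b \<in> E}"
proof -
  let ?S = "{a + b | a b. a \<in> F \<and> b \<in> E}"
  have S: "subspace ?S" using subspace_sums[OF F E] .
  have "F \<inter> E = {0}" using I subspace_0[OF F] subspace_0[OF E] by blast
  then have d0: "dim (F \<inter> E) = 0" by (simp add: dim_insert span_zero)
  have dS: "dim ?S = dim F + dim E" using dim_sums_Int[OF F E] unfolding d0 by simp
  have ST: "?S \<subseteq> T" using ET FT subspace_add[OF T] by blast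
  have "span ?S = span T" using dim_eq_span[OF ST] dS D by simp
  moreover have "span ?S = ?S" using S by (rule span_eq_iff[THEN iffD2])
  moreover have "span T = T" using T by (rule span_eq_iff[THEN iffD2])
  ultimately show ?thesis by simp
qed

theorem lemma4p8:
  fixes M U :: "'a::euclidean_space set"
    and f :: "'a \<Rightarrow> 'a" and f' :: "'a \<Rightarrow> 'a \<Rightarrow> 'a"
    and N :: "'a set" and m :: nat and \<alpha> K lam :: real
    and Es Fc C :: "'a \<Rightarrow> 'a set" and d :: nat
    and x :: 'a and F1 F2 :: "'a set"
  assumes M: "compact M" "C1_submanifold M m"
    and f_C1: "C1_map_on N f f'" "M \<subseteq> N" "f ` M \<subseteq> M"
    and f_Holder: "0 < \<alpha>" "\<alpha> \<le> 1"
      "\<forall>y\<in>M. \<forall>z\<in>M. onorm (\<lambda>v. f' y v - f' z v) \<le> K * dist y z powr \<alpha>"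
    and f_nonsing: "\<forall>y\<in>M. inj_on (f' y) (tangent_space M y)"
    and U: "openin (top_of_set M) U" "f ` closure U \<subseteq> U"
    and split: "\<forall>y\<in>U. subspace (Es y) \<and> subspace (Fc y) \<and> Es y \<inter> Fc y = {0} \<and>
                  {a + b | a b. a \<in> Es y \<and> b \<in> Fc y} = tangent_space M y"
      "continuous_subspace_field U Es" "continuous_subspace_field U Fc"
    and lam: "0 < lam" "lam < 1"
    and Es_inv: "\<forall>y\<in>U. f' y ` Es y = Es (f y)"
    and Es_contr: "\<forall>y\<in>U. \<forall>n. \<forall>v\<in>Es y. norm (iter_deriv f f' n y v) \<le> lam ^ n * norm v"
    and dimF: "\<forall>y\<in>U. dim (Fc y) = d"
    and cone: "\<forall>y\<in>U. C y \<subseteq> tangent_space M y \<and> cone_of_dim (C y) d"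
    and cone_inv: "\<forall>y\<in>U. f' y ` C y \<subseteq> C (f y)"
    and dom: "\<forall>y\<in>U. \<forall>v\<in>Es y. \<forall>u\<in>C y.
                norm (f' y v) * norm u \<le> lam * norm v * norm (f' y u)"
    and x: "x \<in> U"
    and F: "subspace F1" "subspace F2" "dim F1 = d" "dim F2 = d"
      "F1 \<subseteq> C x" "F2 \<subseteq> C x"
  shows "\<exists>\<kappa>. 0 < \<kappa> \<and> \<kappa> < 1 \<and>
     (\<forall>n\<ge>1. \<forall>i. 1 \<le> i \<and> i \<le> n \<longrightarrow>
        theta (Es ((f ^^ i) x)) (iter_deriv f f' i x ` F1) (iter_deriv f f' i x ` F2)
          \<le> \<kappa> ^ i * theta (Es x) F1 F2)"
proof -
  have UM: "U \<subseteq> M" using U(1) by (rule openin_imp_subset)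
  have fU: "f y \<in> U" if "y \<in> U" for y using U(2) that closure_subset by blast
  have linA: "linear (f' y)" if "y \<in> U" for y
    using f_C1(1) f_C1(2) UM that unfolding C1_map_on_def by (meson has_derivative_linear subsetD)
  have Esub: "subspace (Es y)" and Fsub: "subspace (Fc y)" if "y \<in> U" for y
    using split(1) that by blast+
  have Tsub: "subspace (tangent_space M y)" if y: "y \<in> U" for y
  proof -
    have "{a + b | a b. a \<in> Es y \<and> b \<in> Fc y} = tangent_space M y" using split(1) y by blast
    then show ?thesis using subspace_sums[OF Esub[OF y] Fsub[OF y]] by simp
  qed
  have EsT: "Es y \<subseteq> tangent_space M y" if y: "y \<in> U" for y
  proof
    fix v assume "v \<in> Es y"
    then have "v + 0 \<in> {a + b | a b. a \<in> Es y \<and> b \<in> Fc y}"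
      using subspace_0[OF Fsub[OF y]] by blast
    then show "v \<in> tangent_space M y" using split(1) y by simp
  qed
  have CT: "C y \<subseteq> tangent_space M y" if "y \<in> U" for y using cone that by blast
  have EC: "Es y \<inter> C y \<subseteq> {0}" if y: "y \<in> U" for y
  proof
    fix v assume v: "v \<in> Es y \<inter> C y"
    have "norm (f' y v) * norm v \<le> lam * norm v * norm (f' y v)"
      using dom y v by blast
    then have "(1 - lam) * (norm (f' y v) * norm v) \<le> 0" by (simp add: algebra_simps)
    moreover have "0 \<le> norm (f' y v) * norm v" by simp
    ultimately have "norm (f' y v) * norm v = 0" using lam
      by (smt (verit) mult_pos_pos)
    then have "f' y v = 0 \<or> v = 0" by simp
    moreover have "f' y 0 = 0" using linA[OF y] by (simp add: linear_0)
    moreover have "v \<in> tangent_space M y" "0 \<in> tangent_space M y"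
      using v CT[OF y] subspace_0[OF Tsub[OF y]] by auto
    moreover have "inj_on (f' y) (tangent_space M y)" using f_nonsing UM y by blast
    ultimately have "v = 0" by (metis inj_onD)
    then show "v \<in> {0}" by simp
  qed
  define y where "y i = (f ^^ i) x" for i
  define H1 where "H1 i = iter_deriv f f' i x ` F1" for i
  define H2 where "H2 i = iter_deriv f f' i x ` F2" for i
  have yU: "y i \<in> U" for i
    by (induction i) (auto simp: y_def x fU)
  have ySuc: "y (Suc i) = f (y i)" for i by (simp add: y_def)
  have H1Suc: "H1 (Suc i) = f' (y i) ` H1 i" for i
    by (simp add: H1_def y_def image_comp)
  have H2Suc: "H2 (Suc i) = f' (y i) ` H2 i" for i
    by (simp add: H2_def y_def image_comp)
  have base12: "\<exists>L. gpred (Es x) F1 F2 L" and base21: "\<exists>L. gpred (Es x) F2 F1 L"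
  proof -
    have dT: "dim (Es x) + d = dim (tangent_space M x)"
    proof -
      have "dim {a + b | a b. a \<in> Es x \<and> b \<in> Fc x} + dim (Es x \<inter> Fc x) = dim (Es x) + dim (Fc x)"
        using dim_sums_Int Esub[OF x] Fsub[OF x] by blast
      moreover have "Es x \<inter> Fc x = {0}" using split(1) x by blast
      ultimately show ?thesis using split(1) x dimF by (simp add: dim_insert span_zero)
    qed
    have c1: "tangent_space M x \<subseteq> {a + b | a b. a \<in> F1 \<and> b \<in> Es x}"
      by (rule sum_cover[OF Tsub[OF x] Esub[OF x] F(1) EsT[OF x]])
        (use F CT[OF x] EC[OF x] dT in auto)
    have c2: "tangent_space M x \<subseteq> {a + b | a b. a \<in> F2 \<and> b \<in> Es x}"
      by (rule sum_cover[OF Tsub[OF x] Esub[OF x] F(2) EsT[OF x]])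
        (use F CT[OF x] EC[OF x] dT in auto)
    have F1T: "F1 \<subseteq> tangent_space M x" and F2T: "F2 \<subseteq> tangent_space M x"
      using F CT[OF x] by auto
    have I1: "F1 \<inter> Es x \<subseteq> {0}" and I2: "F2 \<inter> Es x \<subseteq> {0}" using F EC[OF x] by auto
    show "\<exists>L. gpred (Es x) F1 F2 L"
      by (rule gpred_exists[OF Esub[OF x] F(1) F(2) I2]) (use c1 c2 F1T F2T in auto)
    show "\<exists>L. gpred (Es x) F2 F1 L"
      by (rule gpred_exists[OF Esub[OF x] F(2) F(1) I1]) (use c1 c2 F1T F2T in auto)
  qed
  have claim: "subspace (H1 i) \<and> subspace (H2 i) \<and> H1 i \<subseteq> C (y i) \<and> H2 i \<subseteq> C (y i) \<and>
     (\<exists>L. gpred (Es (y i)) (H1 i) (H2 i) L) \<and> (\<exists>L. gpred (Es (y i)) (H2 i) (H1 i) L) \<and>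
     theta (Es (y i)) (H1 i) (H2 i) \<le> lam ^ i * theta (Es x) F1 F2" for i
  proof (induction i)
    case 0
    show ?case using F base12 base21 by (simp add: H1_def H2_def y_def)
  next
    case (Suc i)
    let ?A = "f' (y i)" and ?z = "y i"
    have z: "?z \<in> U" by (rule yU)
    have s1: "subspace (H1 i)" and s2: "subspace (H2 i)" and c1: "H1 i \<subseteq> C ?z" and c2: "H2 i \<subseteq> C ?z"
      using Suc.IH by blast+
    obtain L12 where L12: "gpred (Es ?z) (H1 i) (H2 i) L12" using Suc.IH by blast
    obtain L21 where L21: "gpred (Es ?z) (H2 i) (H1 i) L21" using Suc.IH by blast
    have th: "theta (Es ?z) (H1 i) (H2 i) \<le> lam ^ i * theta (Es x) F1 F2" using Suc.IH by blast
    have A: "linear ?A" using linA[OF z] .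
    have AE: "?A ` Es ?z \<subseteq> Es (f ?z)" using Es_inv z by blast
    have fz: "f ?z \<in> U" using fU[OF z] .
    have dom1: "\<forall>v\<in>Es ?z. \<forall>u\<in>H1 i. norm (?A v) * norm u \<le> lam * norm v * norm (?A u)"
      using dom z c1 by blast
    have dom2: "\<forall>v\<in>Es ?z. \<forall>u\<in>H2 i. norm (?A v) * norm u \<le> lam * norm v * norm (?A u)"
      using dom z c2 by blast
    obtain M12 where M12: "gpred (Es (f ?z)) (?A ` H1 i) (?A ` H2 i) M12"
        "op_norm_on (?A ` H1 i) M12 \<le> lam * op_norm_on (H1 i) L12"
      using step[OF A Esub[OF z] Esub[OF fz] s1 AE dom1 _ L12] lam by auto
    obtain M21 where M21: "gpred (Es (f ?z)) (?A ` H2 i) (?A ` H1 i) M21"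
        "op_norm_on (?A ` H2 i) M21 \<le> lam * op_norm_on (H2 i) L21"
      using step[OF A Esub[OF z] Esub[OF fz] s2 AE dom2 _ L21] lam by auto
    have s1': "subspace (?A ` H1 i)" and s2': "subspace (?A ` H2 i)"
      using linear_subspace_image[OF A] s1 s2 by blast+
    have c1': "?A ` H1 i \<subseteq> C (f ?z)" and c2': "?A ` H2 i \<subseteq> C (f ?z)"
      using cone_inv z c1 c2 by blast+
    have gm12: "graph_map (Es (f ?z)) (?A ` H1 i) (?A ` H2 i) = M12"
      by (rule graph_map_eq[OF Esub[OF fz] s1' _ M12(1)]) (use c1' EC[OF fz] in blast)
    have gm21: "graph_map (Es (f ?z)) (?A ` H2 i) (?A ` H1 i) = M21"
      by (rule graph_map_eq[OF Esub[OF fz] s2' _ M21(1)]) (use c2' EC[OF fz] in blast)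
    have gl12: "graph_map (Es ?z) (H1 i) (H2 i) = L12"
      by (rule graph_map_eq[OF Esub[OF z] s1 _ L12]) (use c1 EC[OF z] in blast)
    have gl21: "graph_map (Es ?z) (H2 i) (H1 i) = L21"
      by (rule graph_map_eq[OF Esub[OF z] s2 _ L21]) (use c2 EC[OF z] in blast)
    have "theta (Es (f ?z)) (?A ` H1 i) (?A ` H2 i)
        = max (op_norm_on (?A ` H2 i) M21) (op_norm_on (?A ` H1 i) M12)"
      unfolding theta_def gm12 gm21 ..
    also have "\<dots> \<le> max (lam * op_norm_on (H2 i) L21) (lam * op_norm_on (H1 i) L12)"
      using M12(2) M21(2) by (rule max.mono[rotated])
    also have "\<dots> = lam * theta (Es ?z) (H1 i) (H2 i)"
      unfolding theta_def gl12 gl21 using lam by (simp add: max_mult_distrib_left)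
    also have "\<dots> \<le> lam * (lam ^ i * theta (Es x) F1 F2)"
      using th lam by (simp add: mult_left_mono)
    finally have T: "theta (Es (f ?z)) (?A ` H1 i) (?A ` H2 i) \<le> lam ^ Suc i * theta (Es x) F1 F2"
      by (simp add: mult.assoc)
    show ?case
      unfolding ySuc H1Suc H2Suc using s1' s2' c1' c2' M12(1) M21(1) T by blast
  qed
  show ?thesis
  proof (intro exI[of _ lam] conjI allI impI lam)
    fix n i :: nat assume "1 \<le> n" "1 \<le> i \<and> i \<le> n"
    show "theta (Es ((f ^^ i) x)) (iter_deriv f f' i x ` F1) (iter_deriv f f' i x ` F2)
          \<le> lam ^ i * theta (Es x) F1 F2"
      using claim[of i] unfolding y_def H1_def H2_def by blast
  qed
qed

end
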